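(* Consider the binary model with unknown prior $\mu^*\in(0,1)$ and unknown bias $\alpha^*$, known cutoff $\hat q$ with $0<\mu^*<\hat q<1$, and assume $\alpha^*\ge\frac{\hat q-\mu^*}{1-\mu^*}$, so that $m^*\in[0,1]$. Then for every $T\ge4$, the policy SEJ satisfies $$\mathrm{Reg}_T\le\Big(\frac{1-\mu^*}{\mu^*}+1\Big)\big(2+\lceil\log_2\log_2T\rceil\big)+1=O(\log\log T).$$
   Context: Binary model: $\Omega=A=\{0,1\}$, sender utility $u_S(a,\omega)=\mathbf 1\{a=1\}$. Both the prior $\mu^*=\Pr(\omega=1)$ and the bias $\alpha^*\in(0,1]$ are fixed across rounds and unknown to the sender. After a signal with Bayesian posterior $\nu=\Pr(\omega=1\mid s)$, the receiver takes action $1$ iff $(1-\alpha^* )\mu^*+\alpha^*\nu\ge\hat q$ (ties in favor of action $1$). Signaling family. For $m\in[0,1]$, the scheme $\pi_m$ sends signal High with probability $1$ in state $1$ and with probability $m$ in state $0$, and sends Low otherwise. Define $m^*$ as the solution of $$(1-\alpha^* )\mu^*+\alpha^*\frac{\mu^*}{\mu^*+(1-\mu^* )m^*}=\hat q,$$ so that High under $\pi_m$ induces action $1$ iff $m\le m^*$. Benchmark and regret. The full-information benchmark value per round is $V^*=\mu^*+(1-\mu^* )m^*$, the optimal probability of inducing action $1$ when $(\mu^*,\alpha^* )$ are known. The regret is $\mathrm{Reg}_T=TV^*-\sum_t\mathbb E[\Pr(\text{action }1\text{ in round }t\mid\text{history})]$. Policy SEJ. Initialize $[a,b]=[0,1]$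 and $\varepsilon=1/2$. While $b-a>1/T$ and rounds remain, run a phase: 1. Set $m=m_{\rm prev}=a$. 2. While $m\le b$ and rounds remain, play $\pi_m$ for one round. If the signal is Low, continue. If the signal is High and the receiver takes action $1$, set $m_{\rm prev}\gets m$ and $m\gets m+\varepsilon$. If the signal is High and the receiver takes action $0$, set $[a,b]\gets[m_{\rm prev},m]$, $\varepsilon\gets\varepsilon^2$, and end the phase. 3. If the inner loop ended because $m>b$, set $[a,b]\gets[m_{\rm prev},b]$ and $\varepsilon\gets\varepsilon^2$. Then play $\pi_a$ in all remaining rounds. *)

theory Defs
  imports Complex_Main
begin

(* Binary persuasion model: prior mu = Pr(omega = 1), bias alpha, cutoff q (= q-hat). *)

definition acts1 :: "real \<Rightarrow> real \<Rightarrow> real \<Rightarrow> real \<Rightarrow> bool" where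
  "acts1 mu alpha q nu \<longleftrightarrow> (1 - alpha) * mu + alpha * nu \<ge> q"

definition pHigh :: "real \<Rightarrow> real \<Rightarrow> real" where
  "pHigh mu m = mu + (1 - mu) * m"

definition postHigh :: "real \<Rightarrow> real \<Rightarrow> real" where
  "postHigh mu m = mu / (mu + (1 - mu) * m)"

definition postLow :: real where
  "postLow = 0"

definition prob_act1 :: "real \<Rightarrow> real \<Rightarrow> real \<Rightarrow> real \<Rightarrow> real" where
  "prob_act1 mu alpha q m =
     pHigh mu m * (if acts1 mu alpha q (postHigh mu m) then 1 else 0)
   + (1 - pHigh mu m) * (if acts1 mu alpha q postLow then 1 else 0)"

definition mstar :: "real \<Rightarrow> real \<Rightarrow> real \<Rightarrow> real" where
  "mstar mu alpha q = (THE m. (1 - alpha) * mu + alpha * (mu / (mu + (1 - mu) * m)) = q)"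

(* full-information benchmark per round *)
definition Vstar :: "real \<Rightarrow> real \<Rightarrow> real \<Rightarrow> real" where
  "Vstar mu alpha q = mu + (1 - mu) * mstar mu alpha q"

(* State of policy SEJ. Explore: inside a phase, next round plays pi_m.
   Exploit: outer loop finished, plays pi_a forever. *)
datatype mode = Explore | Exploit

record sej_state =
  st_mode :: mode
  st_a :: real
  st_b :: real
  st_eps :: real
  st_m :: real
  st_mprev :: real

definition sej_outer :: "nat \<Rightarrow> real \<Rightarrow> real \<Rightarrow> real \<Rightarrow> sej_state" where
  "sej_outer T a b e =
     \<lparr> st_mode = (if b - a > 1 / real T then Explore else Exploit),
       st_a = a, st_b = b, st_eps = e, st_m = a, st_mprev = a \<rparr>"

definition sej_init :: "nat \<Rightarrow> sej_state" where
  "sej_init T = sej_outer T 0 1 (1/2)"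

definition sej_played :: "sej_state \<Rightarrow> real" where
  "sej_played s = (if st_mode s = Explore then st_m s else st_a s)"

definition sej_next_high :: "nat \<Rightarrow> bool \<Rightarrow> sej_state \<Rightarrow> sej_state" where
  "sej_next_high T act s =
     (if st_mode s = Exploit then s
      else if act then
        (let m' = st_m s + st_eps s in
         if m' \<le> st_b s then s\<lparr> st_mprev := st_m s, st_m := m' \<rparr>
         else sej_outer T (st_m s) (st_b s) ((st_eps s)\<^sup>2))
      else sej_outer T (st_mprev s) (st_m s) ((st_eps s)\<^sup>2))"

(* A Low signal does not change the state. *)

(* Expected total number of rounds with action 1 (= sum over rounds of
   E[Pr(action 1 in round t | history)]) over the next n rounds, from state s. *)
fun sej_value :: "real \<Rightarrow> real \<Rightarrow> real \<Rightarrow> nat \<Rightarrow> nat \<Rightarrow> sej_state \<Rightarrow> real" where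
  "sej_value mu alpha q T 0 s = 0"
| "sej_value mu alpha q T (Suc n) s =
     (let m = sej_played s; p = pHigh mu m in
        prob_act1 mu alpha q m
      + p * sej_value mu alpha q T n (sej_next_high T (acts1 mu alpha q (postHigh mu m)) s)
      + (1 - p) * sej_value mu alpha q T n s)"

definition sej_regret :: "real \<Rightarrow> real \<Rightarrow> real \<Rightarrow> nat \<Rightarrow> real" where
  "sej_regret mu alpha q T = real T * Vstar mu alpha q - sej_value mu alpha q T T (sej_init T)"

end

theory Submission
  imports Defs
begin

context
  fixes mu alpha q :: real and T :: nat
  assumes A: "0 < mu" "mu < q" "q < 1" "0 < alpha" "alpha \<le> 1"
     "alpha \<ge> (q - mu) / (1 - mu)" "T \<ge> 4"
begin

definition nu :: real where "nu = (q - (1 - alpha) * mu) / alpha"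

lemma nu_bounds: "mu < nu" "nu \<le> 1"
proof -
  have "mu < 1" using A by linarith
  have "alpha * (1 - mu) \<ge> q - mu" using A(6) \<open>mu < 1\<close> by (simp add: pos_divide_le_eq)
  then show "nu \<le> 1" unfolding nu_def using A by (simp add: divide_le_eq algebra_simps)
  show "mu < nu" unfolding nu_def using A by (simp add: less_divide_eq algebra_simps)
qed

definition M0 :: real where "M0 = (mu / nu - mu) / (1 - mu)"

lemma mstar_eq: "mstar mu alpha q = M0"
proof -
  have mu1: "mu < 1" using A by linarith
  have nupos: "nu > 0" using nu_bounds A by linarith
  have key: "(1 - alpha) * mu + alpha * (mu / (mu + (1 - mu) * m)) = q \<longleftrightarrow> m = M0" for m
  proof
    assume h: "(1 - alpha) * mu + alpha * (mu / (mu + (1 - mu) * m)) = q"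
    hence "mu / (mu + (1 - mu) * m) = nu" unfolding nu_def using A by (simp add: field_simps)
    hence D: "mu + (1 - mu) * m \<noteq> 0" using nupos by auto
    hence "mu = nu * (mu + (1 - mu) * m)" using \<open>mu / _ = nu\<close> by (simp add: field_simps)
    thus "m = M0" unfolding M0_def using nupos mu1 by (simp add: field_simps)
  next
    assume "m = M0"
    hence "mu + (1 - mu) * m = mu / nu" unfolding M0_def using mu1 by simp
    hence "mu / (mu + (1 - mu) * m) = nu" using nupos A by simp
    thus "(1 - alpha) * mu + alpha * (mu / (mu + (1 - mu) * m)) = q"
      unfolding nu_def using A by (simp add: field_simps)
  qed
  show ?thesis unfolding mstar_def using key by simp
qed

lemma M0_bounds: "0 \<le> M0" "M0 \<le> 1"
proof -
  have mu1: "mu < 1" using A by linarith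
  have nupos: "nu > 0" using nu_bounds A by linarith
  have "mu / nu \<ge> mu" using nu_bounds A nupos by (simp add: le_divide_eq)
  thus "0 \<le> M0" unfolding M0_def using mu1 by simp
  have "mu / nu \<le> 1" using nu_bounds A nupos by (simp add: divide_le_eq)
  thus "M0 \<le> 1" unfolding M0_def using mu1 by (simp add: divide_le_eq)
qed

lemma acts_iff: assumes "0 \<le> m" shows "acts1 mu alpha q (postHigh mu m) \<longleftrightarrow> m \<le> M0"
proof -
  have mu1: "mu < 1" using A by linarith
  have nupos: "nu > 0" using nu_bounds A by linarith
  have "(1 - mu) * m \<ge> 0" using assms mu1 by simp
  hence Dpos: "mu + (1 - mu) * m > 0" using A by linarith
  have "acts1 mu alpha q (postHigh mu m) \<longleftrightarrow> mu / (mu + (1 - mu) * m) \<ge> nu"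
    unfolding acts1_def postHigh_def nu_def using A by (simp add: divide_le_eq algebra_simps)
  also have "\<dots> \<longleftrightarrow> nu * (mu + (1 - mu) * m) \<le> mu" using Dpos by (simp add: le_divide_eq)
  also have "\<dots> \<longleftrightarrow> mu + (1 - mu) * m \<le> mu / nu" using nupos by (simp add: le_divide_eq mult.commute)
  also have "\<dots> \<longleftrightarrow> m \<le> M0" unfolding M0_def using mu1 by (simp add: le_divide_eq algebra_simps)
  finally show ?thesis .
qed

lemma not_acts_low: "\<not> acts1 mu alpha q postLow"
proof -
  have "(1 - alpha) * mu \<le> 1 * mu" using A by (intro mult_right_mono) auto
  hence "(1 - alpha) * mu < q" using A by linarith
  thus ?thesis unfolding acts1_def postLow_def by simp
qed

definition Qf :: "real \<Rightarrow> real \<Rightarrow> real" where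
  "Qf d e = (if 0 \<le> d then d * (d + e) / (2 * e) + e / 8 else 0)"

definition NN :: real where "NN = real_of_int \<lceil>log 2 (log 2 (real T))\<rceil>"

definition cc :: real where "cc = (1 - mu) / mu"

definition lam :: "real \<Rightarrow> real" where "lam e = log 2 (log 2 (1 / e))"

definition Pot :: "sej_state \<Rightarrow> real" where
  "Pot s = (if st_mode s = Explore then
     cc * Qf (M0 - st_m s) (st_eps s) + 1 + (cc + 1) * (NN - lam (st_eps s)) else 0)"

definition Inv :: "sej_state \<Rightarrow> bool" where
  "Inv s \<longleftrightarrow> (if st_mode s = Explore then
     0 \<le> st_mprev s \<and> st_mprev s \<le> M0 \<and> st_mprev s \<le> st_m s \<and> st_m s \<le> st_mprev s + st_eps s
     \<and> st_m s \<le> st_b s \<and> M0 \<le> st_b s \<and> st_b s \<le> 1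
     \<and> (\<exists>k::nat. st_eps s = (1/2) ^ (2 ^ k) \<and> real k \<le> NN)
   else 0 \<le> st_a s \<and> st_a s \<le> M0 \<and> M0 \<le> st_b s \<and> st_b s - st_a s \<le> 1 / real T)"

lemma lam_pow: "lam ((1/2) ^ (2 ^ k)) = real k"
  unfolding lam_def by (simp add: power_one_over log_nat_power)

lemma cc_nonneg: "cc \<ge> 0" unfolding cc_def using A by simp

lemma Qf_nonneg: assumes "e > 0" shows "Qf d e \<ge> 0"
  unfolding Qf_def using assms by auto

lemma Qf_ge: assumes "e > 0" "0 \<le> d" shows "Qf d e \<ge> d"
proof -
  have "(d - e/2)^2 \<ge> 0" by simp
  hence "d * (d + e) / (2 * e) + e / 8 - d = (d - e/2)^2 / (2*e)" using assms
    by (simp add: field_simps power2_eq_square)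
  moreover have "(d - e/2)^2 / (2*e) \<ge> 0" using assms by simp
  moreover have "Qf d e = d * (d + e) / (2 * e) + e / 8" unfolding Qf_def using assms by simp
  ultimately show ?thesis by linarith
qed

lemma Qf_step: assumes "e > 0" "0 \<le> d" shows "Qf d e - Qf (d - e) e \<ge> d"
proof (cases "0 \<le> d - e")
  case True
  have "Qf d e - Qf (d - e) e = d" unfolding Qf_def using assms True
    by (simp add: field_simps)
  thus ?thesis by simp
next
  case False
  thus ?thesis using Qf_ge[OF assms] unfolding Qf_def by simp
qed

lemma Qf_small: assumes "0 < e" "e \<le> 1/2" "0 \<le> d" "d \<le> e" shows "Qf d (e^2) \<le> 1"
proof -
  have "d * (d + e^2) \<le> e * (e + e^2)" using assms
    by (intro mult_mono add_mono) (auto simp: power2_eq_square)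
  hence "d * (d + e^2) / (2 * e^2) \<le> e * (e + e^2) / (2 * e^2)" using assms
    by (intro divide_right_mono) auto
  also have "\<dots> = (1 + e) / 2" using assms by (simp add: field_simps power2_eq_square)
  finally have h: "d * (d + e^2) / (2 * e^2) \<le> (1 + e) / 2" .
  have "e^2 \<le> 1" using assms by (simp add: power_le_one)
  hence "e^2 / 8 \<le> 1/8" by simp
  moreover have "(1 + e) / 2 \<le> 3/4" using assms by simp
  moreover have "0 \<le> d" using assms by simp
  moreover have "Qf d (e^2) = d*(d+e^2)/(2*e^2) + e^2/8" unfolding Qf_def using assms by simp
  ultimately show ?thesis using h by linarith
qed

lemma NN_ge: "NN \<ge> 1"
proof -
  have "log 2 (real T) \<ge> log 2 4" using A by simp
  moreover have "log 2 (4::real) = 2"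
  proof -
    have "log 2 ((2::real)*2) = log 2 2 + log 2 2" by (rule log_mult_pos) auto
    thus ?thesis by simp
  qed
  ultimately have "log 2 (real T) \<ge> 2" by simp
  hence "log 2 (log 2 (real T)) \<ge> 1" by simp
  thus ?thesis unfolding NN_def by (meson le_of_int_ceiling order_trans)
qed


lemma half_pow_sq: "((1/2::real) ^ (2 ^ k))^2 = (1/2) ^ (2 ^ Suc k)"
  by (simp add: power_mult[symmetric] mult.commute)

lemma half_pow_le: "(1/2::real) ^ (2 ^ k) \<le> 1/2"
proof -
  have "(1/2::real) ^ (2 ^ k) \<le> (1/2) ^ 1"
    by (rule power_decreasing) auto
  thus ?thesis by simp
qed

lemma half_pow_pos: "(1/2::real) ^ (2 ^ k) > 0" by simp

lemma k_bound: assumes "(1/2::real) ^ (2 ^ k) > 1 / real T" shows "real k + 1 \<le> NN"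
proof -
  have T0: "real T > 0" using A by simp
  have "(1/2::real) ^ (2 ^ k) = 1 / 2 ^ (2 ^ k)" by (simp add: power_one_over)
  with assms have "1 / real T < 1 / 2 ^ (2 ^ k)" by simp
  hence lt: "(2::real) ^ (2 ^ k) < real T" using T0 by (simp add: divide_less_eq field_simps)
  have "log 2 ((2::real) ^ (2 ^ k)) < log 2 (real T)"
    using lt by (subst log_less_cancel_iff) auto
  hence l1: "(2::real) ^ k < log 2 (real T)" by simp
  have "log 2 ((2::real) ^ k) < log 2 (log 2 (real T))"
    using l1 by (subst log_less_cancel_iff) (auto intro: order.strict_trans[of 0 "2^k"])
  hence "real k < log 2 (log 2 (real T))" by simp
  hence "int k < \<lceil>log 2 (log 2 (real T))\<rceil>" by (simp add: less_ceiling_iff)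
  hence "int k + 1 \<le> \<lceil>log 2 (log 2 (real T))\<rceil>" by simp
  hence "real_of_int (int k + 1) \<le> NN" unfolding NN_def by (simp only: of_int_le_iff)
  thus ?thesis by simp
qed

lemma outer:
  assumes "0 \<le> a" "a \<le> M0" "M0 \<le> b" "b \<le> 1" "b - a \<le> (1/2) ^ (2 ^ k)" "real k \<le> NN"
  shows "Inv (sej_outer T a b (((1/2) ^ (2 ^ k))^2)) \<and>
         Pot (sej_outer T a b (((1/2) ^ (2 ^ k))^2)) \<le> (cc + 1) * (NN - real k)"
proof (cases "b - a > 1 / real T")
  case True
  define e :: real where "e = (1/2) ^ (2 ^ k)"
  have kb: "real k + 1 \<le> NN" using True assms(5) by (intro k_bound) linarith
  have e2: "e^2 = (1/2) ^ (2 ^ Suc k)" unfolding e_def by (rule half_pow_sq)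
  have "Inv (sej_outer T a b (e^2))"
    unfolding Inv_def sej_outer_def using True assms kb e2
    by (auto intro!: exI[of _ "Suc k"])
  moreover have "Qf (M0 - a) (e^2) \<le> 1"
    using Qf_small[of e "M0 - a"] assms half_pow_le[of k] half_pow_pos[of k] unfolding e_def by auto
  moreover have "lam (e^2) = real k + 1" unfolding e2 lam_pow by simp
  ultimately have "Inv (sej_outer T a b (e^2)) \<and> Pot (sej_outer T a b (e^2)) \<le> (cc + 1) * (NN - real k)"
    unfolding Pot_def sej_outer_def using True cc_nonneg
    by (auto simp: algebra_simps mult_left_le)
  thus ?thesis unfolding e_def .
next
  case False
  thus ?thesis unfolding Inv_def Pot_def sej_outer_def using assms cc_nonneg by auto
qed

lemma pa_eq: assumes "0 \<le> m"
  shows "prob_act1 mu alpha q m = (if m \<le> M0 then pHigh mu m else 0)"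
  unfolding prob_act1_def using acts_iff[OF assms] not_acts_low by simp

lemma Pot_nonneg: assumes "Inv s" shows "Pot s \<ge> 0"
proof (cases "st_mode s = Explore")
  case True
  then obtain k where k: "st_eps s = (1/2) ^ (2 ^ k)" "real k \<le> NN" using assms unfolding Inv_def by auto
  have "Qf (M0 - st_m s) (st_eps s) \<ge> 0" using Qf_nonneg k by simp
  thus ?thesis unfolding Pot_def using True k lam_pow cc_nonneg by simp
qed (simp add: Pot_def)

lemma step:
  assumes "Inv s"
  defines "m \<equiv> sej_played s"
  defines "p \<equiv> pHigh mu m"
  defines "s' \<equiv> sej_next_high T (acts1 mu alpha q (postHigh mu m)) s"
  shows "Inv s' \<and> 0 \<le> p \<and> p \<le> 1 \<and>
    pHigh mu M0 - prob_act1 mu alpha q m \<le> p * (Pot s - Pot s') + (1 - mu) / real T"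
proof (cases "st_mode s = Explore")
  case True
  have mu1: "mu < 1" using A by linarith
  then obtain k where k: "st_eps s = (1/2) ^ (2 ^ k)" "real k \<le> NN" using assms True unfolding Inv_def by auto
  define e where "e = st_eps s"
  have e0: "e > 0" "e \<le> 1/2" using k half_pow_le[of k] unfolding e_def by auto
  have lamk: "lam e = real k" using k lam_pow unfolding e_def by simp
  have mdef: "m = st_m s" unfolding m_def sej_played_def using True by simp
  have I: "0 \<le> st_mprev s" "st_mprev s \<le> M0" "st_mprev s \<le> m" "m \<le> st_mprev s + e"
     "m \<le> st_b s" "M0 \<le> st_b s" "st_b s \<le> 1"
    using assms(1) True unfolding Inv_def mdef e_def by auto
  have m0: "0 \<le> m" using I by linarith
  have "m \<le> 1" using I by linarith
  hence "(1 - mu) * m \<le> (1 - mu) * 1" using mu1 by (intro mult_left_mono) auto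
  hence "(1 - mu) * m \<le> 1 - mu" by simp
  moreover have "(1 - mu) * m \<ge> 0" using m0 mu1 by simp
  ultimately have p01: "mu \<le> p" "p \<le> 1" unfolding p_def pHigh_def by linarith+
  have Ps: "Pot s = cc * Qf (M0 - m) e + 1 + (cc + 1) * (NN - real k)"
    unfolding Pot_def using True lamk mdef e_def by simp
  have Tpos: "(1 - mu) / real T \<ge> 0" using mu1 by simp
  have ccmu: "p * cc \<ge> 1 - mu"
  proof -
    have "p * cc - (1 - mu) = (p - mu) * (1 - mu) / mu" unfolding cc_def using A
      by (simp add: field_simps)
    moreover have "(p - mu) * (1 - mu) / mu \<ge> 0" using p01 mu1 A by simp
    ultimately show ?thesis by linarith
  qed
  show ?thesis
  proof (cases "m \<le> M0")
    case good: True
    have act: "acts1 mu alpha q (postHigh mu m)" using acts_iff m0 good by simp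
    have cost: "pHigh mu M0 - prob_act1 mu alpha q m = (1 - mu) * (M0 - m)"
      using pa_eq[OF m0] good unfolding pHigh_def by (simp add: algebra_simps)
    show ?thesis
    proof (cases "m + e \<le> st_b s")
      case True2: True
      have s'eq: "s' = s\<lparr>st_mprev := m, st_m := m + e\<rparr>"
        unfolding s'_def sej_next_high_def using True act True2 mdef e_def by (simp add: Let_def)
      have "Inv s'" unfolding s'eq Inv_def using True I good True2 m0 k e_def by auto
      moreover have "Pot s' = cc * Qf ((M0 - m) - e) e + 1 + (cc + 1) * (NN - real k)"
        unfolding s'eq Pot_def using True lamk e_def by (simp add: algebra_simps)
      moreover have qs: "Qf (M0 - m) e - Qf ((M0 - m) - e) e \<ge> M0 - m"
        using Qf_step e0 good by simp
      moreover have "cc * (Qf (M0 - m) e - Qf ((M0 - m) - e) e) \<ge> cc * (M0 - m)"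
        using qs cc_nonneg by (intro mult_left_mono) auto
      ultimately have I': "Inv s'" and D: "Pot s - Pot s' \<ge> cc * (M0 - m)"
        using Ps by (auto simp: algebra_simps)
      have f1: "(1 - mu) * (M0 - m) \<le> p * (cc * (M0 - m))"
        using ccmu good by (simp add: mult.assoc[symmetric] mult_right_mono)
      have f2: "p * (cc * (M0 - m)) \<le> p * (Pot s - Pot s')"
        using D p01 A by (intro mult_left_mono) auto
      have "pHigh mu M0 - prob_act1 mu alpha q m \<le> p * (Pot s - Pot s') + (1 - mu) / real T"
        using f1 f2 cost Tpos by linarith
      thus ?thesis using I' p01 A by auto
    next
      case False2: False
      have s'eq: "s' = sej_outer T m (st_b s) (e^2)"
        unfolding s'_def sej_next_high_def using True act False2 mdef e_def by (simp add: Let_def)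
      have O: "Inv s' \<and> Pot s' \<le> (cc + 1) * (NN - real k)"
        unfolding s'eq using outer[of m "st_b s" k] m0 good I False2 k e_def by auto
      have "Qf (M0 - m) e \<ge> M0 - m" using Qf_ge e0 good by simp
      hence "cc * Qf (M0 - m) e \<ge> cc * (M0 - m)" using cc_nonneg by (simp add: mult_left_mono)
      hence D: "Pot s - Pot s' \<ge> cc * (M0 - m)" using O Ps by linarith
      have f1: "(1 - mu) * (M0 - m) \<le> p * (cc * (M0 - m))"
        using ccmu good by (simp add: mult.assoc[symmetric] mult_right_mono)
      have f2: "p * (cc * (M0 - m)) \<le> p * (Pot s - Pot s')"
        using D p01 A by (intro mult_left_mono) auto
      have "pHigh mu M0 - prob_act1 mu alpha q m \<le> p * (Pot s - Pot s') + (1 - mu) / real T"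
        using f1 f2 cost Tpos by linarith
      thus ?thesis using O p01 A by auto
    qed
  next
    case bad: False
    have nact: "\<not> acts1 mu alpha q (postHigh mu m)" using acts_iff m0 bad by simp
    have cost: "pHigh mu M0 - prob_act1 mu alpha q m = pHigh mu M0"
      using pa_eq[OF m0] bad by simp
    have s'eq: "s' = sej_outer T (st_mprev s) m (e^2)"
      unfolding s'_def sej_next_high_def using True nact mdef e_def by simp
    have O: "Inv s' \<and> Pot s' \<le> (cc + 1) * (NN - real k)"
      unfolding s'eq using outer[of "st_mprev s" m k] I bad k e_def by auto
    have "Qf (M0 - m) e = 0" unfolding Qf_def using bad by simp
    hence "Pot s = 1 + (cc + 1) * (NN - real k)" using Ps by simp
    hence d1: "Pot s - Pot s' \<ge> 1" using O by linarith
    have "pHigh mu M0 \<le> p" unfolding p_def pHigh_def using bad mu1 by simp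
    also have "p \<le> p * (Pot s - Pot s')" using d1 p01 A by (simp add: mult_le_cancel_left1)
    finally have "pHigh mu M0 \<le> p * (Pot s - Pot s')" .
    hence "pHigh mu M0 - prob_act1 mu alpha q m \<le> p * (Pot s - Pot s') + (1 - mu) / real T"
      using cost Tpos by linarith
    thus ?thesis using O p01 A by auto
  qed
next
  case False
  hence ex: "st_mode s = Exploit" by (cases "st_mode s") auto
  have mu1: "mu < 1" using A by linarith
  have I: "0 \<le> st_a s" "st_a s \<le> M0" "M0 \<le> st_b s" "st_b s - st_a s \<le> 1 / real T"
    using assms(1) ex unfolding Inv_def by auto
  have mdef: "m = st_a s" unfolding m_def sej_played_def using ex by simp
  have s'eq: "s' = s" unfolding s'_def sej_next_high_def using ex by simp
  have "m \<le> 1" "0 \<le> m" using I M0_bounds mdef by linarith+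
  hence "(1 - mu) * m \<le> (1 - mu) * 1" using mu1 by (intro mult_left_mono) auto
  moreover have "(1 - mu) * m \<ge> 0" using mu1 \<open>0 \<le> m\<close> by simp
  ultimately have "(1 - mu) * m \<le> 1 - mu" "(1 - mu) * m \<ge> 0" by simp_all
  hence p01: "0 \<le> p" "p \<le> 1" unfolding p_def pHigh_def using A by linarith+
  have cost: "pHigh mu M0 - prob_act1 mu alpha q m = (1 - mu) * (M0 - st_a s)"
    using pa_eq[of m] I mdef unfolding pHigh_def by (simp add: algebra_simps)
  also have "\<dots> \<le> (1 - mu) * (1 / real T)" using I mu1 by (intro mult_left_mono) auto
  finally show ?thesis using s'eq assms(1) p01 by simp
qed

lemma main_ind:
  "Inv s \<Longrightarrow> real n * pHigh mu M0 - sej_value mu alpha q T n s \<le> Pot s + real n * ((1 - mu) / real T)"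
proof (induction n arbitrary: s)
  case 0
  thus ?case using Pot_nonneg by simp
next
  case (Suc n)
  define m where "m = sej_played s"
  define p where "p = pHigh mu m"
  define s' where "s' = sej_next_high T (acts1 mu alpha q (postHigh mu m)) s"
  have St: "Inv s' \<and> 0 \<le> p \<and> p \<le> 1 \<and>
    pHigh mu M0 - prob_act1 mu alpha q m \<le> p * (Pot s - Pot s') + (1 - mu) / real T"
    using step[OF Suc.prems] unfolding m_def p_def s'_def by blast
  define E where "E = real n * ((1 - mu) / real T)"
  have ih1: "real n * pHigh mu M0 - sej_value mu alpha q T n s' \<le> Pot s' + E"
    using Suc.IH St unfolding E_def by blast
  have ih2: "real n * pHigh mu M0 - sej_value mu alpha q T n s \<le> Pot s + E"
    using Suc.IH Suc.prems unfolding E_def by blast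
  have val: "sej_value mu alpha q T (Suc n) s =
     prob_act1 mu alpha q m + p * sej_value mu alpha q T n s' + (1 - p) * sej_value mu alpha q T n s"
    unfolding m_def p_def s'_def by (simp add: Let_def)
  have "real (Suc n) * pHigh mu M0 - sej_value mu alpha q T (Suc n) s
     = (pHigh mu M0 - prob_act1 mu alpha q m)
       + p * (real n * pHigh mu M0 - sej_value mu alpha q T n s')
       + (1 - p) * (real n * pHigh mu M0 - sej_value mu alpha q T n s)"
    unfolding val by (simp add: algebra_simps)
  also have "\<dots> \<le> (p * (Pot s - Pot s') + (1 - mu) / real T) + p * (Pot s' + E) + (1 - p) * (Pot s + E)"
    using St ih1 ih2 by (intro add_mono mult_left_mono) auto
  also have "\<dots> = Pot s + real (Suc n) * ((1 - mu) / real T)"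
    unfolding E_def by (simp add: algebra_simps add_divide_distrib[symmetric] diff_divide_distrib[symmetric])
  finally show ?case .
qed

lemma final:
  "sej_regret mu alpha q T
     \<le> ((1 - mu) / mu + 1) * (2 + real_of_int \<lceil>log 2 (log 2 (real T))\<rceil>) + 1"
proof -
  have T4: "real T \<ge> 4" using A by simp
  have mu1: "mu < 1" using A by linarith
  have Tg: "1 / real T < 1" using T4 by simp
  have I0: "Inv (sej_init T)"
    unfolding sej_init_def sej_outer_def Inv_def using Tg M0_bounds NN_ge
    by (auto intro!: exI[of _ 0])
  have "Qf M0 (1/2) = M0 * (M0 + 1/2) + 1/16" unfolding Qf_def using M0_bounds by simp
  also have "\<dots> \<le> 1 * (1 + 1/2) + 1/16" using M0_bounds
    by (intro add_mono mult_mono) auto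
  finally have Q0: "Qf M0 (1/2) \<le> 2" by simp
  have lam0: "lam (1/2) = 0" using lam_pow[of 0] by simp
  have P0: "Pot (sej_init T) = cc * Qf M0 (1/2) + 1 + (cc + 1) * NN"
    unfolding Pot_def sej_init_def sej_outer_def using Tg lam0 by simp
  have "cc * Qf M0 (1/2) \<le> cc * 2" using Q0 cc_nonneg by (simp add: mult_left_mono)
  hence P0b: "Pot (sej_init T) \<le> (cc + 1) * (2 + NN) - 1" using P0 by (simp add: algebra_simps)
  have V: "Vstar mu alpha q = pHigh mu M0" unfolding Vstar_def pHigh_def mstar_eq ..
  have "real T * ((1 - mu) / real T) = 1 - mu" using T4 by simp
  hence "sej_regret mu alpha q T \<le> Pot (sej_init T) + (1 - mu)"
    using main_ind[OF I0, of T] unfolding sej_regret_def V by simp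
  also have "\<dots> \<le> (cc + 1) * (2 + NN) + 1" using P0b A by linarith
  finally show ?thesis unfolding cc_def NN_def .
qed

end

theorem propositionF1:
  fixes mu alpha q :: real and T :: nat
  assumes "0 < mu" "mu < q" "q < 1"
    and "0 < alpha" "alpha \<le> 1"
    and "alpha \<ge> (q - mu) / (1 - mu)"
    and "T \<ge> 4"
  shows "sej_regret mu alpha q T
           \<le> ((1 - mu) / mu + 1) * (2 + real_of_int \<lceil>log 2 (log 2 (real T))\<rceil>) + 1"
  using final[OF assms] .

end
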